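(* For every number of candidates $m\ge 2$, the distortion of \textsc{PluralityMatching} (over all metric spaces, i.e.\ $\alpha=1$, with worst-case choice among the candidates it may return) is $3$, and this is optimal: no deterministic social choice rule has distortion smaller than $3$.
   Context: An election consists of voters $V=\{1,\dots,n\}$, a finite set $C$ of $m$ candidates, and a profile $\sigma=(\sigma_i)_{i\in V}$ of linear orders over $C$; $c\succeq_i c'$ means $c=c'$ or $i$ ranks $c$ above $c'$. A distance function $d$ on $V\cup C$ is nonnegative, symmetric and satisfies the triangle inequality (co-location allowed); it is consistent with $\sigma$ if $d(i,c)\le d(i,c')$ whenever $i$ ranks $c$ above $c'$. $\mathrm{top}(i)$ is $i$'s first-ranked candidate; $\mathrm{SC}(c)=\sum_{i\in V} d(i,c)$. A deterministic social choice rule maps each profile (of any number of voters, over the fixed set $C$) to a candidate; its distortion is $\sup_\sigma \sup_{d \text{ consistent with }\sigma} \mathrm{SC}(f(\sigma))/\min_{c}\mathrm{SC}(c)$. The integral domination graph $G(a)$ of candidate $a$ is the bipartite graph with both sides copies of $V$ and edge $(i,j)$ iff $a\succeq_i \mathrm{top}(j)$. \textsc{PluralityMatching} returns an arbitrary candidate $a$ for which $G(a)$ admits a perfect matching. *)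

theory Defs
  imports Complex_Main "HOL-Library.Extended_Real"
begin

text \<open>Voters are the naturals 0..n-1 (standing for 1..n); candidates form a finite
set C of type 'c. Points of the space are of type nat + 'c: Inl i is voter i,
Inr c is candidate c.\<close>

definition voters :: "nat \<Rightarrow> nat set" where
  "voters n = {..<n}"

definition points :: "nat \<Rightarrow> 'c set \<Rightarrow> (nat + 'c) set" where
  "points n C = Inl ` voters n \<union> Inr ` C"

text \<open>A profile: each voter i has a linear order sigma i on C, given as a
(reflexive) relation; (c, c') in sigma i means c is ranked weakly above c'
by voter i (i.e. c = c' or c is ranked above c').\<close>

definition profile :: "'c set \<Rightarrow> nat \<Rightarrow> (nat \<Rightarrow> ('c \<times> 'c) set) \<Rightarrow> bool" where
  "profile C n \<sigma> \<longleftrightarrow> (\<forall>i\<in>voters n. linear_order_on C (\<sigma> i))"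

definition weakly_prefers :: "(nat \<Rightarrow> ('c \<times> 'c) set) \<Rightarrow> nat \<Rightarrow> 'c \<Rightarrow> 'c \<Rightarrow> bool" where
  "weakly_prefers \<sigma> i c c' \<longleftrightarrow> (c, c') \<in> \<sigma> i"

definition strictly_prefers :: "(nat \<Rightarrow> ('c \<times> 'c) set) \<Rightarrow> nat \<Rightarrow> 'c \<Rightarrow> 'c \<Rightarrow> bool" where
  "strictly_prefers \<sigma> i c c' \<longleftrightarrow> (c, c') \<in> \<sigma> i \<and> c \<noteq> c'"

definition top :: "'c set \<Rightarrow> (nat \<Rightarrow> ('c \<times> 'c) set) \<Rightarrow> nat \<Rightarrow> 'c" where
  "top C \<sigma> i = (THE c. c \<in> C \<and> (\<forall>c'\<in>C. weakly_prefers \<sigma> i c c'))"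

definition is_distance :: "nat \<Rightarrow> 'c set \<Rightarrow> (nat + 'c \<Rightarrow> nat + 'c \<Rightarrow> real) \<Rightarrow> bool" where
  "is_distance n C d \<longleftrightarrow>
     (\<forall>x\<in>points n C. d x x = 0) \<and>
     (\<forall>x\<in>points n C. \<forall>y\<in>points n C. d x y \<ge> 0 \<and> d x y = d y x) \<and>
     (\<forall>x\<in>points n C. \<forall>y\<in>points n C. \<forall>z\<in>points n C. d x z \<le> d x y + d y z)"

definition consistent :: "nat \<Rightarrow> 'c set \<Rightarrow> (nat \<Rightarrow> ('c \<times> 'c) set) \<Rightarrow> (nat + 'c \<Rightarrow> nat + 'c \<Rightarrow> real) \<Rightarrow> bool" where
  "consistent n C \<sigma> d \<longleftrightarrow>
     (\<forall>i\<in>voters n. \<forall>c\<in>C. \<forall>c'\<in>C. strictly_prefers \<sigma> i c c' \<longrightarrow> d (Inl i) (Inr c) \<le> d (Inl i) (Inr c'))"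

definition SC :: "nat \<Rightarrow> (nat + 'c \<Rightarrow> nat + 'c \<Rightarrow> real) \<Rightarrow> 'c \<Rightarrow> real" where
  "SC n d c = (\<Sum>i\<in>voters n. d (Inl i) (Inr c))"

definition opt_cost :: "'c set \<Rightarrow> nat \<Rightarrow> (nat + 'c \<Rightarrow> nat + 'c \<Rightarrow> real) \<Rightarrow> real" where
  "opt_cost C n d = Min ((\<lambda>c. SC n d c) ` C)"

definition cost_ratio :: "'c set \<Rightarrow> nat \<Rightarrow> (nat + 'c \<Rightarrow> nat + 'c \<Rightarrow> real) \<Rightarrow> 'c \<Rightarrow> ereal" where
  "cost_ratio C n d a =
     (if opt_cost C n d = 0 then (if SC n d a = 0 then 1 else \<infinity>)
      else ereal (SC n d a / opt_cost C n d))"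

definition valid_instance :: "'c set \<Rightarrow> nat \<Rightarrow> (nat \<Rightarrow> ('c \<times> 'c) set) \<Rightarrow> (nat + 'c \<Rightarrow> nat + 'c \<Rightarrow> real) \<Rightarrow> bool" where
  "valid_instance C n \<sigma> d \<longleftrightarrow> n \<ge> 1 \<and> profile C n \<sigma> \<and> is_distance n C d \<and> consistent n C \<sigma> d"

definition is_rule :: "'c set \<Rightarrow> (nat \<Rightarrow> (nat \<Rightarrow> ('c \<times> 'c) set) \<Rightarrow> 'c) \<Rightarrow> bool" where
  "is_rule C f \<longleftrightarrow> (\<forall>n \<sigma>. n \<ge> 1 \<and> profile C n \<sigma> \<longrightarrow> f n \<sigma> \<in> C)"

definition distortion :: "'c set \<Rightarrow> (nat \<Rightarrow> (nat \<Rightarrow> ('c \<times> 'c) set) \<Rightarrow> 'c) \<Rightarrow> ereal" where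
  "distortion C f = (SUP x \<in> {(n, \<sigma>, d). valid_instance C n \<sigma> d}.
                       (case x of (n, \<sigma>, d) \<Rightarrow> cost_ratio C n d (f n \<sigma>)))"

text \<open>Integral domination graph G(a): bipartite, both sides copies of V,
edge (i, j) iff a is weakly preferred by i to top(j).\<close>

definition dom_edge :: "'c set \<Rightarrow> (nat \<Rightarrow> ('c \<times> 'c) set) \<Rightarrow> 'c \<Rightarrow> nat \<Rightarrow> nat \<Rightarrow> bool" where
  "dom_edge C \<sigma> a i j \<longleftrightarrow> weakly_prefers \<sigma> i a (top C \<sigma> j)"

definition perfect_matching :: "nat set \<Rightarrow> (nat \<Rightarrow> nat \<Rightarrow> bool) \<Rightarrow> (nat \<times> nat) set \<Rightarrow> bool" where
  "perfect_matching V E M \<longleftrightarrow>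
     M \<subseteq> V \<times> V \<and> (\<forall>(i, j)\<in>M. E i j) \<and>
     (\<forall>i\<in>V. \<exists>!j. (i, j) \<in> M) \<and> (\<forall>j\<in>V. \<exists>!i. (i, j) \<in> M)"

definition admits_pm :: "'c set \<Rightarrow> nat \<Rightarrow> (nat \<Rightarrow> ('c \<times> 'c) set) \<Rightarrow> 'c \<Rightarrow> bool" where
  "admits_pm C n \<sigma> a \<longleftrightarrow> (\<exists>M. perfect_matching (voters n) (dom_edge C \<sigma> a) M)"

text \<open>Distortion of PluralityMatching with worst-case choice among the candidates
it may return.\<close>

definition pm_distortion :: "'c set \<Rightarrow> ereal" where
  "pm_distortion C = (SUP x \<in> {(n, \<sigma>, d, a). valid_instance C n \<sigma> d \<and> a \<in> C \<and> admits_pm C n \<sigma> a}.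
                       (case x of (n, \<sigma>, d, a) \<Rightarrow> cost_ratio C n d a))"

end

theory Submission
  imports Defs
begin

lemma lo_props:
  assumes "linear_order_on C r"
  shows "r \<subseteq> C \<times> C" "\<And>x. x \<in> C \<Longrightarrow> (x, x) \<in> r"
    "\<And>x y z. (x, y) \<in> r \<Longrightarrow> (y, z) \<in> r \<Longrightarrow> (x, z) \<in> r"
    "\<And>x y. (x, y) \<in> r \<Longrightarrow> (y, x) \<in> r \<Longrightarrow> x = y"
    "\<And>x y. x \<in> C \<Longrightarrow> y \<in> C \<Longrightarrow> x \<noteq> y \<Longrightarrow> (x, y) \<in> r \<or> (y, x) \<in> r"
  using assms unfolding linear_order_on_def partial_order_on_def preorder_on_def refl_on_def
    trans_on_def antisym_on_def total_on_def
  by blast+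

lemma lo_min:
  assumes "linear_order_on C r" "finite S" "S \<noteq> {}" "S \<subseteq> C"
  shows "\<exists>c\<in>S. \<forall>s\<in>S. (s, c) \<in> r"
  using assms(2,3,4)
proof (induction S rule: finite_ne_induct)
  case (singleton x)
  then show ?case using lo_props(2)[OF assms(1)] by auto
next
  case (insert x F)
  then obtain c where c: "c \<in> F" "\<forall>s\<in>F. (s, c) \<in> r" by auto
  show ?case
  proof (cases "(x, c) \<in> r")
    case True
    then show ?thesis using c by auto
  next
    case False
    then have "(c, x) \<in> r" using lo_props(5)[OF assms(1), of x c] lo_props(2)[OF assms(1), of x] insert c by auto
    then show ?thesis using c lo_props(3)[OF assms(1)] lo_props(2)[OF assms(1), of x] insert by blast
  qed
qed

lemma top_prop:
  assumes "linear_order_on C (\<sigma> i)" "finite C" "C \<noteq> {}"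
  shows "top C \<sigma> i \<in> C \<and> (\<forall>c'\<in>C. weakly_prefers \<sigma> i (top C \<sigma> i) c')"
proof -
  have lc: "linear_order_on C ((\<sigma> i)\<inverse>)" using assms(1) by simp
  obtain c where c: "c \<in> C" "\<forall>s\<in>C. (s, c) \<in> (\<sigma> i)\<inverse>" using lo_min[OF lc assms(2,3)] by blast
  have "\<exists>!c. c \<in> C \<and> (\<forall>c'\<in>C. weakly_prefers \<sigma> i c c')"
  proof
    show "c \<in> C \<and> (\<forall>c'\<in>C. weakly_prefers \<sigma> i c c')" using c by (auto simp: weakly_prefers_def)
    fix y assume "y \<in> C \<and> (\<forall>c'\<in>C. weakly_prefers \<sigma> i y c')"
    then show "y = c" using c lo_props(4)[OF assms(1), of y c] by (auto simp: weakly_prefers_def)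
  qed
  then show ?thesis unfolding top_def by (rule theI')
qed

lemma veto:
  assumes "\<forall>i\<in>U. linear_order_on C (\<sigma> i)"
  shows "finite W \<Longrightarrow> finite U \<Longrightarrow> card U = card W \<Longrightarrow> W \<noteq> {} \<Longrightarrow> t ` W \<subseteq> C \<Longrightarrow>
    \<exists>a\<in>t ` W. \<exists>\<pi>. bij_betw \<pi> U W \<and> (\<forall>i\<in>U. (a, t (\<pi> i)) \<in> \<sigma> i)"
  using assms
proof (induction "card W" arbitrary: U W rule: less_induct)
  case less
  have "U \<noteq> {}" using less by auto
  then obtain i0 where i0: "i0 \<in> U" by auto
  have lo0: "linear_order_on C (\<sigma> i0)" using less i0 by auto
  obtain c where c: "c \<in> t ` W" "\<forall>s\<in>t ` W. (s, c) \<in> \<sigma> i0"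
    using lo_min[OF lo0, of "t ` W"] less by auto
  obtain j0 where j0: "j0 \<in> W" "t j0 = c" using c by auto
  show ?case
  proof (cases "card W = 1")
    case True
    then have W: "W = {j0}" using j0 card_1_singletonE by (metis singletonD)
    have U: "U = {i0}" using True less i0 card_1_singletonE by (metis singletonD)
    have "(c, c) \<in> \<sigma> i0" using lo_props(2)[OF lo0] c less by auto
    then show ?thesis using W U j0 c by (auto simp: bij_betw_def)
  next
    case False
    define U' where "U' = U - {i0}"
    define W' where "W' = W - {j0}"
    have cW: "card W' < card W" unfolding W'_def by (rule card_Diff1_less[OF less(2) j0(1)])
    have cU: "card U' = card W'" using j0 i0 less(2,3,4) unfolding W'_def U'_def by simp
    have ne: "W' \<noteq> {}"
    proof
      assume "W' = {}"
      then have "W = {j0}" using j0 unfolding W'_def by auto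
      then show False using False by simp
    qed
    obtain a \<pi> where a: "a \<in> t ` W'" "bij_betw \<pi> U' W'" "\<forall>i\<in>U'. (a, t (\<pi> i)) \<in> \<sigma> i"
      using less(1)[OF cW, of U'] less(2-7) cU ne unfolding W'_def U'_def by auto
    define \<pi>2 where "\<pi>2 = \<pi>(i0 := j0)"
    have b1: "bij_betw \<pi>2 U' W'" using a(2) unfolding \<pi>2_def U'_def
      by (metis Diff_iff bij_betw_cong fun_upd_other singletonI)
    have b2: "bij_betw \<pi>2 {i0} {j0}" unfolding \<pi>2_def by (simp add: bij_betw_def)
    have bb: "bij_betw \<pi>2 (U' \<union> {i0}) (W' \<union> {j0})"
      by (rule bij_betw_combine[OF b1 b2]) (auto simp: W'_def)
    have UW: "U' \<union> {i0} = U" "W' \<union> {j0} = W" using i0 j0 unfolding U'_def W'_def by auto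
    have ac: "(a, c) \<in> \<sigma> i0" using c a(1) unfolding W'_def by auto
    have all: "\<forall>i\<in>U. (a, t (\<pi>2 i)) \<in> \<sigma> i"
    proof
      fix i assume "i \<in> U"
      show "(a, t (\<pi>2 i)) \<in> \<sigma> i"
      proof (cases "i = i0")
        case True then show ?thesis using ac j0 unfolding \<pi>2_def by simp
      next
        case False then have "i \<in> U'" using \<open>i \<in> U\<close> unfolding U'_def by simp
        then show ?thesis using a(3) False unfolding \<pi>2_def by simp
      qed
    qed
    have "a \<in> t ` W" using a(1) unfolding W'_def by auto
    then show ?thesis using bb UW all by metis
  qed
qed

lemma part1:
  assumes "finite C" "C \<noteq> {}" "n \<ge> 1" "profile C n \<sigma>"
  shows "\<exists>a\<in>C. admits_pm C n \<sigma> a"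
proof -
  have lo: "\<forall>i\<in>voters n. linear_order_on C (\<sigma> i)" using assms(4) by (simp add: profile_def)
  have tC: "top C \<sigma> ` voters n \<subseteq> C" using top_prop lo assms(1,2) by blast
  obtain a \<pi> where a: "a \<in> top C \<sigma> ` voters n" "bij_betw \<pi> (voters n) (voters n)"
     "\<forall>i\<in>voters n. (a, top C \<sigma> (\<pi> i)) \<in> \<sigma> i"
  proof -
    have "0 \<in> voters n" using assms(3) by (simp add: voters_def)
    then have "voters n \<noteq> {}" by blast
    then show ?thesis using veto[OF lo _ _ _ _ tC] that by (auto simp: voters_def)
  qed
  define M where "M = {(i, \<pi> i) | i. i \<in> voters n}"
  have "perfect_matching (voters n) (dom_edge C \<sigma> a) M"
    unfolding perfect_matching_def
  proof (intro conjI)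
    show "M \<subseteq> voters n \<times> voters n" using a(2) unfolding M_def bij_betw_def by auto
    show "\<forall>(i, j)\<in>M. dom_edge C \<sigma> a i j" using a(3) unfolding M_def dom_edge_def weakly_prefers_def by auto
    show "\<forall>i\<in>voters n. \<exists>!j. (i, j) \<in> M" unfolding M_def by auto
    show "\<forall>j\<in>voters n. \<exists>!i. (i, j) \<in> M" 
    proof
      fix j assume "j \<in> voters n"
      then have "j \<in> \<pi> ` voters n" using a(2) by (simp add: bij_betw_def)
      then obtain i where "i \<in> voters n" "\<pi> i = j" by blast
      then show "\<exists>!i. (i, j) \<in> M" using a(2) unfolding M_def bij_betw_def inj_on_def by auto
    qed
  qed
  then show ?thesis using a(1) tC unfolding admits_pm_def by auto
qed

definition rk :: "('c \<Rightarrow> nat) \<Rightarrow> 'c \<Rightarrow> 'c \<Rightarrow> 'c \<Rightarrow> nat" where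
  "rk g a b c = (if c = a then 0 else if c = b then 1 else g c + 2)"

definition ord_of :: "'c set \<Rightarrow> ('c \<Rightarrow> nat) \<Rightarrow> ('c \<times> 'c) set" where
  "ord_of C r = {(x, y). x \<in> C \<and> y \<in> C \<and> r x \<le> r y}"

definition Pf :: "'c set \<Rightarrow> ('c \<Rightarrow> nat) \<Rightarrow> 'c \<Rightarrow> 'c \<Rightarrow> nat \<Rightarrow> ('c \<times> 'c) set" where
  "Pf C g a b = (\<lambda>i. if i = 0 then ord_of C (rk g a b) else ord_of C (rk g b a))"

definition dpos :: "(nat + 'c \<Rightarrow> real) \<Rightarrow> nat + 'c \<Rightarrow> nat + 'c \<Rightarrow> real" where
  "dpos p x y = \<bar>p x - p y\<bar>"

lemma ord_of_lin: "inj_on r C \<Longrightarrow> linear_order_on C (ord_of C r)"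
  unfolding linear_order_on_def partial_order_on_def preorder_on_def refl_on_def
    trans_on_def antisym_on_def total_on_def ord_of_def inj_on_def
  by (auto intro: order_trans)

lemma rk_inj: "inj_on g C \<Longrightarrow> inj_on (rk g a b) C"
  unfolding inj_on_def rk_def by auto

lemma dpos_dist: "is_distance n C (dpos p)"
  unfolding is_distance_def dpos_def by auto

lemma strict_rk: "strictly_prefers (\<lambda>_. ord_of C r) i c c' \<Longrightarrow> inj_on r C \<Longrightarrow> r c < r c'"
  unfolding strictly_prefers_def ord_of_def inj_on_def
  by (metis (no_types, lifting) case_prodD le_neq_implies_less mem_Collect_eq)

lemma SC2: "SC 2 d c = d (Inl 0) (Inr c) + d (Inl 1) (Inr c)"
  unfolding SC_def voters_def by (simp add: numeral_2_eq_2 lessThan_Suc)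

definition posA :: "'c \<Rightarrow> 'c \<Rightarrow> nat + 'c \<Rightarrow> real" where
  "posA a b x = (case x of Inl i \<Rightarrow> (if i = 0 then 1 else 2)
     | Inr c \<Rightarrow> (if c = a then 0 else if c = b then 2 else 4))"

definition posB :: "'c \<Rightarrow> 'c \<Rightarrow> nat + 'c \<Rightarrow> real" where
  "posB a b x = (case x of Inl i \<Rightarrow> (if i = 0 then 0 else 1)
     | Inr c \<Rightarrow> (if c = a then 0 else if c = b then 2 else -2))"

lemma lb:
  assumes "finite C" "a \<in> C" "b \<in> C" "a \<noteq> b" "x \<in> C" "inj_on g C"
  shows "\<exists>d. valid_instance C 2 (Pf C g a b) d \<and> cost_ratio C 2 d x \<ge> 3"
proof -
  have prof: "profile C 2 (Pf C g a b)"
    unfolding profile_def Pf_def using ord_of_lin rk_inj[OF assms(6)] by auto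
  have inj1: "inj_on (rk g a b) C" "inj_on (rk g b a) C" using rk_inj[OF assms(6)] by auto
  have sp: "strictly_prefers (Pf C g a b) i c c' \<Longrightarrow> (i = 0 \<longrightarrow> rk g a b c < rk g a b c') \<and> (i \<noteq> 0 \<longrightarrow> rk g b a c < rk g b a c')" for i c c'
  proof -
    assume h: "strictly_prefers (Pf C g a b) i c c'"
    show ?thesis
    proof (cases "i = 0")
      case True
      then have "strictly_prefers (\<lambda>_. ord_of C (rk g a b)) i c c'" using h
        unfolding strictly_prefers_def Pf_def by simp
      then show ?thesis using strict_rk[OF _ inj1(1)] True by auto
    next
      case False
      then have "strictly_prefers (\<lambda>_. ord_of C (rk g b a)) i c c'" using h
        unfolding strictly_prefers_def Pf_def by simp
      then show ?thesis using strict_rk[OF _ inj1(2)] False by auto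
    qed
  qed
  have vi1: "i \<in> voters 2 \<Longrightarrow> i = 0 \<or> i = 1" for i by (auto simp: voters_def)
  have dA0: "dpos (posA a b) (Inl 0) (Inr c) = (if c = a then 1 else if c = b then 1 else 3)" for c
    using assms(4) by (simp add: dpos_def posA_def)
  have dA1: "dpos (posA a b) (Inl 1) (Inr c) = (if c = a then 2 else if c = b then 0 else 2)" for c
    using assms(4) by (simp add: dpos_def posA_def)
  have consA: "consistent 2 C (Pf C g a b) (dpos (posA a b))"
    unfolding consistent_def
  proof (intro ballI impI)
    fix i c c' assume h: "i \<in> voters 2" "c \<in> C" "c' \<in> C" "strictly_prefers (Pf C g a b) i c c'"
    have r: "(i = 0 \<longrightarrow> rk g a b c < rk g a b c') \<and> (i \<noteq> 0 \<longrightarrow> rk g b a c < rk g b a c')"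
      using sp[OF h(4)] .
    show "dpos (posA a b) (Inl i) (Inr c) \<le> dpos (posA a b) (Inl i) (Inr c')"
    proof (cases "i = 0")
      case True
      then have "rk g a b c < rk g a b c'" using r by simp
      then show ?thesis using True dA0[of c] dA0[of c'] assms(4) unfolding rk_def by (auto split: if_splits)
    next
      case False
      then have "i = 1" using vi1 h(1) by blast
      moreover have "rk g b a c < rk g b a c'" using r False by simp
      ultimately show ?thesis using dA1[of c] dA1[of c'] assms(4) unfolding rk_def by (auto split: if_splits)
    qed
  qed
  have dB0: "dpos (posB a b) (Inl 0) (Inr c) = (if c = a then 0 else if c = b then 2 else 2)" for c
    using assms(4) by (simp add: dpos_def posB_def)
  have dB1: "dpos (posB a b) (Inl 1) (Inr c) = (if c = a then 1 else if c = b then 1 else 3)" for c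
    using assms(4) by (simp add: dpos_def posB_def)
  have consB: "consistent 2 C (Pf C g a b) (dpos (posB a b))"
    unfolding consistent_def
  proof (intro ballI impI)
    fix i c c' assume h: "i \<in> voters 2" "c \<in> C" "c' \<in> C" "strictly_prefers (Pf C g a b) i c c'"
    have r: "(i = 0 \<longrightarrow> rk g a b c < rk g a b c') \<and> (i \<noteq> 0 \<longrightarrow> rk g b a c < rk g b a c')"
      using sp[OF h(4)] .
    show "dpos (posB a b) (Inl i) (Inr c) \<le> dpos (posB a b) (Inl i) (Inr c')"
    proof (cases "i = 0")
      case True
      then have "rk g a b c < rk g a b c'" using r by simp
      then show ?thesis using True dB0[of c] dB0[of c'] assms(4) unfolding rk_def by (auto split: if_splits)
    next
      case False
      then have "i = 1" using vi1 h(1) by blast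
      moreover have "rk g b a c < rk g b a c'" using r False by simp
      ultimately show ?thesis using dB1[of c] dB1[of c'] assms(4) unfolding rk_def by (auto split: if_splits)
    qed
  qed
  have SCA: "SC 2 (dpos (posA a b)) c = (if c = a then 3 else if c = b then 1 else 5)" for c
    unfolding SC2 dpos_def posA_def using assms(4) by auto
  have SCB: "SC 2 (dpos (posB a b)) c = (if c = a then 1 else if c = b then 3 else 5)" for c
    unfolding SC2 dpos_def posB_def using assms(4) by auto
  have optA: "opt_cost C 2 (dpos (posA a b)) = 1"
    unfolding opt_cost_def
    by (rule Min_eqI) (use assms SCA in auto)
  have optB: "opt_cost C 2 (dpos (posB a b)) = 1"
    unfolding opt_cost_def
    by (rule Min_eqI) (use assms SCB in auto)
  show ?thesis
  proof (cases "x = b")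
    case True
    then show ?thesis using optB SCB consB prof dpos_dist assms(4)
      by (intro exI[of _ "dpos (posB a b)"]) (auto simp: valid_instance_def cost_ratio_def)
  next
    case False
    then show ?thesis using optA SCA consA prof dpos_dist assms(4)
      by (intro exI[of _ "dpos (posA a b)"]) (auto simp: valid_instance_def cost_ratio_def)
  qed
qed

lemma ub:
  assumes "finite C" "C \<noteq> {}" "valid_instance C n \<sigma> d" "a \<in> C" "admits_pm C n \<sigma> a"
  shows "cost_ratio C n d a \<le> 3"
proof -
  let ?V = "voters n"
  have n1: "n \<ge> 1" and prof: "profile C n \<sigma>" and dist: "is_distance n C d" and cons: "consistent n C \<sigma> d"
    using assms(3) by (auto simp: valid_instance_def)
  have lo: "\<And>i. i \<in> ?V \<Longrightarrow> linear_order_on C (\<sigma> i)" using prof by (simp add: profile_def)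
  obtain M where M: "perfect_matching ?V (dom_edge C \<sigma> a) M" using assms(5) unfolding admits_pm_def by blast
  define \<pi> where "\<pi> i = (THE j. (i, j) \<in> M)" for i
  have piM: "(i, \<pi> i) \<in> M" if "i \<in> ?V" for i
  proof -
    have "\<exists>!j. (i, j) \<in> M" using M that unfolding perfect_matching_def by blast
    then show ?thesis unfolding \<pi>_def by (rule theI')
  qed
  have piV: "\<pi> i \<in> ?V" if "i \<in> ?V" for i using piM[OF that] M unfolding perfect_matching_def by blast
  have edge: "dom_edge C \<sigma> a i (\<pi> i)" if "i \<in> ?V" for i using piM[OF that] M unfolding perfect_matching_def by blast
  have bij: "bij_betw \<pi> ?V ?V"
    unfolding bij_betw_def
  proof
    show "inj_on \<pi> ?V"
    proof (rule inj_onI)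
      fix i i' assume h: "i \<in> ?V" "i' \<in> ?V" "\<pi> i = \<pi> i'"
      have "\<exists>!k. (k, \<pi> i) \<in> M" using M piV[OF h(1)] unfolding perfect_matching_def by blast
      then show "i = i'" using piM[OF h(1)] piM[OF h(2)] h(3) by auto
    qed
    show "\<pi> ` ?V = ?V"
    proof
      show "\<pi> ` ?V \<subseteq> ?V" using piV by auto
      show "?V \<subseteq> \<pi> ` ?V"
      proof
        fix j assume j: "j \<in> ?V"
        then obtain i where i: "(i, j) \<in> M" using M unfolding perfect_matching_def by blast
        then have iV: "i \<in> ?V" using M unfolding perfect_matching_def by blast
        have "\<exists>!k. (i, k) \<in> M" using M iV unfolding perfect_matching_def by blast
        then have "\<pi> i = j" using piM[OF iV] i by auto
        then show "j \<in> \<pi> ` ?V" using iV by blast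
      qed
    qed
  qed
  have ptsV: "Inl i \<in> points n C" if "i \<in> ?V" for i using that by (simp add: points_def)
  have ptsC: "Inr c \<in> points n C" if "c \<in> C" for c using that by (simp add: points_def)
  have dsym: "\<And>x y. x \<in> points n C \<Longrightarrow> y \<in> points n C \<Longrightarrow> d x y = d y x"
    and dnn: "\<And>x y. x \<in> points n C \<Longrightarrow> y \<in> points n C \<Longrightarrow> d x y \<ge> 0"
    and dtri: "\<And>x y z. x \<in> points n C \<Longrightarrow> y \<in> points n C \<Longrightarrow> z \<in> points n C \<Longrightarrow> d x z \<le> d x y + d y z"
    using dist unfolding is_distance_def by blast+
  have wp: "d (Inl i) (Inr x) \<le> d (Inl i) (Inr y)" if "i \<in> ?V" "x \<in> C" "y \<in> C" "weakly_prefers \<sigma> i x y" for i x y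
  proof (cases "x = y")
    case True then show ?thesis by simp
  next
    case False
    then have "strictly_prefers \<sigma> i x y" using that(4) unfolding weakly_prefers_def strictly_prefers_def by simp
    then show ?thesis using cons that unfolding consistent_def by blast
  qed
  have key: "SC n d a \<le> 3 * SC n d c" if c: "c \<in> C" for c
  proof -
    have pt: "d (Inl i) (Inr a) \<le> d (Inl i) (Inr c) + 2 * d (Inl (\<pi> i)) (Inr c)" if i: "i \<in> ?V" for i
    proof -
      define j where "j = \<pi> i"
      have j: "j \<in> ?V" using piV[OF i] unfolding j_def .
      define tj where "tj = top C \<sigma> j"
      have tjp: "tj \<in> C \<and> (\<forall>c'\<in>C. weakly_prefers \<sigma> j tj c')"
        unfolding tj_def using top_prop[of C \<sigma> j, OF lo[OF j] assms(1,2)] .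
      have "weakly_prefers \<sigma> i a tj" using edge[OF i] unfolding dom_edge_def j_def tj_def .
      then have 1: "d (Inl i) (Inr a) \<le> d (Inl i) (Inr tj)" using wp[OF i assms(4)] tjp by blast
      have 2: "d (Inl i) (Inr tj) \<le> d (Inl i) (Inr c) + d (Inr c) (Inr tj)"
        using dtri ptsV[OF i] ptsC[OF c] ptsC tjp by blast
      have 3: "d (Inr c) (Inr tj) \<le> d (Inr c) (Inl j) + d (Inl j) (Inr tj)"
        using dtri ptsV[OF j] ptsC[OF c] ptsC tjp by blast
      have 4: "d (Inr c) (Inl j) = d (Inl j) (Inr c)" using dsym ptsV[OF j] ptsC[OF c] by blast
      have 5: "d (Inl j) (Inr tj) \<le> d (Inl j) (Inr c)" using wp[OF j] tjp c by blast
      show ?thesis using 1 2 3 4 5 unfolding j_def by linarith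
    qed
    have "SC n d a \<le> (\<Sum>i\<in>?V. d (Inl i) (Inr c) + 2 * d (Inl (\<pi> i)) (Inr c))"
      unfolding SC_def by (rule sum_mono) (rule pt)
    also have "\<dots> = SC n d c + 2 * (\<Sum>i\<in>?V. d (Inl (\<pi> i)) (Inr c))"
      unfolding SC_def by (simp add: sum.distrib sum_distrib_left)
    also have "(\<Sum>i\<in>?V. d (Inl (\<pi> i)) (Inr c)) = SC n d c"
      unfolding SC_def using sum.reindex_bij_betw[OF bij, of "\<lambda>j. d (Inl j) (Inr c)"] by simp
    finally show ?thesis by simp
  qed
  have SCnn: "SC n d c \<ge> 0" if "c \<in> C" for c
    unfolding SC_def by (rule sum_nonneg) (use dnn ptsV ptsC that in blast)
  have "opt_cost C n d \<in> SC n d ` C" unfolding opt_cost_def using assms(1,2) by (intro Min_in) auto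
  then obtain c0 where c0: "c0 \<in> C" "opt_cost C n d = SC n d c0" by blast
  have le: "SC n d a \<le> 3 * opt_cost C n d" using key[OF c0(1)] c0 by simp
  have onn: "opt_cost C n d \<ge> 0" using SCnn c0 by simp
  show ?thesis
  proof (cases "opt_cost C n d = 0")
    case True
    then have "SC n d a = 0" using le SCnn[OF assms(4)] by simp
    then show ?thesis using True unfolding cost_ratio_def by simp
  next
    case False
    then have "opt_cost C n d > 0" using onn by simp
    then have "SC n d a / opt_cost C n d \<le> 3" using le by (simp add: divide_le_eq)
    then show ?thesis using False unfolding cost_ratio_def by simp
  qed
qed

theorem corollary2:
  fixes C :: "'c set"
  assumes "finite C" and "card C \<ge> 2"
  shows "(\<forall>n \<sigma>. n \<ge> 1 \<and> profile C n \<sigma> \<longrightarrow> (\<exists>a\<in>C. admits_pm C n \<sigma> a))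
         \<and> pm_distortion C = 3
         \<and> (\<forall>f. is_rule C f \<longrightarrow> distortion C f \<ge> 3)"
proof -
  obtain a b where ab: "a \<in> C" "b \<in> C" "a \<noteq> b"
  proof -
    have "C \<noteq> {}" using assms(2) by auto
    then obtain a where a: "a \<in> C" by blast
    have "card (C - {a}) \<ge> 1" using assms a by simp
    then have "C - {a} \<noteq> {}" by (metis card.empty not_one_le_zero)
    then obtain b where "b \<in> C - {a}" by blast
    then show ?thesis using that a by blast
  qed
  have Cne: "C \<noteq> {}" using ab by auto
  obtain g :: "'c \<Rightarrow> nat" and k where g: "g ` C = {..<k}" "inj_on g C"
    using finite_imp_inj_to_nat_seg[OF assms(1)] by blast
  define P where "P = Pf C g a b"
  have P1: "\<forall>n \<sigma>. n \<ge> 1 \<and> profile C n \<sigma> \<longrightarrow> (\<exists>a\<in>C. admits_pm C n \<sigma> a)"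
    using part1[OF assms(1) Cne] by blast
  have profP: "profile C 2 P"
    using lb[OF assms(1) ab ab(1) g(2)] unfolding P_def valid_instance_def by blast
  have P2: "pm_distortion C = 3"
  proof (rule antisym)
    show "pm_distortion C \<le> 3"
      unfolding pm_distortion_def
      by (rule SUP_least) (use ub[OF assms(1) Cne] in auto)
    obtain x where x: "x \<in> C" "admits_pm C 2 P x" using part1[OF assms(1) Cne _ profP] by auto
    obtain d where d: "valid_instance C 2 P d" "cost_ratio C 2 d x \<ge> 3"
      using lb[OF assms(1) ab x(1) g(2)] unfolding P_def by blast
    show "3 \<le> pm_distortion C"
      unfolding pm_distortion_def
      by (rule SUP_upper2[of "(2, P, d, x)"]) (use x d in auto)
  qed
  have P3: "\<forall>f. is_rule C f \<longrightarrow> distortion C f \<ge> 3"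
  proof (intro allI impI)
    fix f assume f: "is_rule C f"
    have x: "f 2 P \<in> C" using f profP unfolding is_rule_def by auto
    obtain d where d: "valid_instance C 2 P d" "cost_ratio C 2 d (f 2 P) \<ge> 3"
      using lb[OF assms(1) ab x g(2)] unfolding P_def by blast
    show "distortion C f \<ge> 3"
      unfolding distortion_def
      by (rule SUP_upper2[of "(2, P, d)"]) (use d in auto)
  qed
  show ?thesis using P1 P2 P3 by blast
qed

end
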